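(* Let $(X,M)$ be a supermidpoint set, with associated binary operation $m(x,y)=M(x,y,y,\dots)$. The following are equivalent: (1) $X$ is cancellative, i.e. $m(x,y)=m(x,z)$ implies $y=z$; (2) for all sequences $(x_i),(y_i),(z_i),(w_i)$ of elements of $X$, if $m_n(x_0,\dots,x_{n-1},z_n)=m_n(y_0,\dots,y_{n-1},w_n)$ for all $n\ge 0$, then $M(x_0,x_1,x_2,\dots)=M(y_0,y_1,y_2,\dots)$.
   Context: A supermidpoint set is a set $X$ with $M\colon X^\omega\to X$ (written $M_i\,x_i=M(x_0,x_1,\dots)$) satisfying: $M(x,x,x,\dots)=x$; $M(x,y,y,\dots)=M(y,x,x,\dots)$; $M_iM_j\,x_{ij}=M_jM_i\,x_{ij}$; $M_i\,x_i=M(x_0,M_i x_{i+1},M_i x_{i+1},\dots)$. Derived operations: $m_0(x)=x$, $m_n(x_0,\dots,x_n)=m(x_0,m_{n-1}(x_1,\dots,x_n))$ for $n\ge1$ (so for $n=0$ the hypothesis reads $z_0=w_0$). *)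

theory Defs
  imports Main
begin

definition supermidpoint :: "((nat \<Rightarrow> 'a) \<Rightarrow> 'a) \<Rightarrow> bool" where
  "supermidpoint M \<longleftrightarrow>
     (\<forall>x. M (\<lambda>_. x) = x) \<and>
     (\<forall>x y. M (\<lambda>i. if i = 0 then x else y) = M (\<lambda>i. if i = 0 then y else x)) \<and>
     (\<forall>x :: nat \<Rightarrow> nat \<Rightarrow> 'a. M (\<lambda>i. M (\<lambda>j. x i j)) = M (\<lambda>j. M (\<lambda>i. x i j))) \<and>
     (\<forall>x. M x = M (\<lambda>i. if i = 0 then x 0 else M (\<lambda>k. x (Suc k))))"

definition mid2 :: "((nat \<Rightarrow> 'a) \<Rightarrow> 'a) \<Rightarrow> 'a \<Rightarrow> 'a \<Rightarrow> 'a" where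
  "mid2 M x y = M (\<lambda>i. if i = 0 then x else y)"

text \<open>Derived operations: midn M n f = m_n(f 0, ..., f n).\<close>
fun midn :: "((nat \<Rightarrow> 'a) \<Rightarrow> 'a) \<Rightarrow> nat \<Rightarrow> (nat \<Rightarrow> 'a) \<Rightarrow> 'a" where
  "midn M 0 f = f 0"
| "midn M (Suc n) f = mid2 M (f 0) (midn M n (\<lambda>i. f (Suc i)))"

definition cancellative :: "((nat \<Rightarrow> 'a) \<Rightarrow> 'a) \<Rightarrow> bool" where
  "cancellative M \<longleftrightarrow> (\<forall>x y z. mid2 M x y = mid2 M x z \<longrightarrow> y = z)"

end

theory Submission
  imports Defs
begin

locale smp =
  fixes M :: "(nat \<Rightarrow> 'a) \<Rightarrow> 'a"
  assumes sm: "supermidpoint M"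
begin

abbreviation m where "m \<equiv> mid2 M"

lemma idem: "m a a = a"
  using sm unfolding supermidpoint_def mid2_def by simp

lemma comm: "m a b = m b a"
  using sm unfolding supermidpoint_def mid2_def by blast

lemma shift: "M x = m (x 0) (M (\<lambda>k. x (Suc k)))"
  using sm unfolding supermidpoint_def mid2_def by blast

lemma Msplit: "M (\<lambda>i. m (f i) (g i)) = m (M f) (M g)"
proof -
  have all: "\<forall>x :: nat \<Rightarrow> nat \<Rightarrow> 'a. M (\<lambda>i. M (\<lambda>j. x i j)) = M (\<lambda>j. M (\<lambda>i. x i j))"
    using sm unfolding supermidpoint_def by blast
  have ax: "M (\<lambda>i. M (\<lambda>j. (if j = 0 then f i else g i))) = M (\<lambda>j. M (\<lambda>i. (if j = 0 then f i else g i)))"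
    using spec[OF all, of "\<lambda>i j. if j = 0 then f i else g i"] by simp
  have e: "(\<lambda>j. M (\<lambda>i. (if j = 0 then f i else g i))) = (\<lambda>j. if j = 0 then M f else M g)"
    by (rule ext) simp
  have e2: "(\<lambda>i. m (f i) (g i)) = (\<lambda>i. M (\<lambda>j. if j = 0 then f i else g i))"
    by (rule ext) (rule mid2_def)
  have "M (\<lambda>i. m (f i) (g i)) = M (\<lambda>i. M (\<lambda>j. if j = 0 then f i else g i))"
    using e2 by (rule arg_cong)
  also have "\<dots> = M (\<lambda>j. M (\<lambda>i. (if j = 0 then f i else g i)))" by (rule ax)
  also have "\<dots> = M (\<lambda>j. if j = 0 then M f else M g)" using e by (rule arg_cong)
  also have "\<dots> = m (M f) (M g)" by (rule mid2_def[symmetric])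
  finally show ?thesis .
qed

lemma medial: "m (m a b) (m c d) = m (m a c) (m b d)"
proof -
  define F where "F = (\<lambda>i::nat. if i = 0 then a else c)"
  define G where "G = (\<lambda>i::nat. if i = 0 then b else d)"
  have e: "(\<lambda>i. m (F i) (G i)) = (\<lambda>i. if i = 0 then m a b else m c d)"
    by (rule ext) (simp add: F_def G_def)
  have "m (m a b) (m c d) = M (\<lambda>i. if i = 0 then m a b else m c d)" by (rule mid2_def)
  also have "\<dots> = M (\<lambda>i. m (F i) (G i))" using e[symmetric] by (rule arg_cong)
  also have "\<dots> = m (M F) (M G)" by (rule Msplit)
  also have "M F = m a c" unfolding F_def by (rule mid2_def[symmetric])
  also have "M G = m b d" unfolding G_def by (rule mid2_def[symmetric])
  finally show ?thesis .
qed

fun pre :: "nat \<Rightarrow> (nat \<Rightarrow> 'a) \<Rightarrow> 'a \<Rightarrow> 'a" where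
  "pre 0 u p = p"
| "pre (Suc n) u p = m (u 0) (pre n (\<lambda>i. u (Suc i)) p)"

lemma midn_pre: "midn M n (\<lambda>i. if i < n then u i else p) = pre n u p"
proof (induction n arbitrary: u)
  case 0 then show ?case by simp
next
  case (Suc n)
  have "(\<lambda>i. if Suc i < Suc n then u (Suc i) else p) = (\<lambda>i. if i < n then u (Suc i) else p)" by simp
  then show ?case using Suc[of "\<lambda>i. u (Suc i)"] by simp
qed

lemma pre_last: "pre (Suc n) u p = pre n u (m (u n) p)"
proof (induction n arbitrary: u)
  case 0 then show ?case by simp
next
  case (Suc n)
  have "pre (Suc (Suc n)) u p = m (u 0) (pre (Suc n) (\<lambda>i. u (Suc i)) p)" by (rule pre.simps(2))
  also have "pre (Suc n) (\<lambda>i. u (Suc i)) p = pre n (\<lambda>i. u (Suc i)) (m (u (Suc n)) p)" by (rule Suc.IH)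
  also have "m (u 0) (pre n (\<lambda>i. u (Suc i)) (m (u (Suc n)) p)) = pre (Suc n) u (m (u (Suc n)) p)"
    by (rule pre.simps(2)[symmetric])
  finally show ?case .
qed

lemma pre_medial: "m (pre n u p) (pre n v q) = pre n (\<lambda>i. m (u i) (v i)) (m p q)"
  by (induction n arbitrary: u v) (simp_all add: medial)

lemma swap: assumes "m y g = m z g" shows "m y (m z g) = m z (m y g)"
proof -
  have "m y (m z g) = m (m y y) (m z g)" by (simp add: idem)
  also have "\<dots> = m (m y z) (m y g)" by (rule medial)
  also have "\<dots> = m (m z y) (m z g)" using assms comm by metis
  also have "\<dots> = m (m z z) (m y g)" by (rule medial)
  finally show ?thesis by (simp add: idem)
qed

lemma const_chain: assumes "m x y = m x z"
  shows "pre n (\<lambda>_. y) x = pre n (\<lambda>_. z) x \<and> m y (pre n (\<lambda>_. y) x) = m z (pre n (\<lambda>_. y) x)"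
proof (induction n)
  case 0 then show ?case using assms comm by simp
next
  case (Suc n)
  let ?g = "pre n (\<lambda>_. y) x"
  have g1: "pre (Suc n) (\<lambda>_. y) x = m y ?g" by simp
  have g2: "pre (Suc n) (\<lambda>_. z) x = m z ?g" using Suc by simp
  have "m y (m y ?g) = m z (m y ?g)"
  proof -
    have "m y ?g = m z ?g" using Suc by blast
    then have "m y (m y ?g) = m y (m z ?g)" by (rule arg_cong)
    also have "\<dots> = m z (m y ?g)" using swap Suc by blast
    finally show ?thesis .
  qed
  moreover have "m y ?g = m z ?g" using Suc by blast
  ultimately show ?case unfolding g1 g2 by simp
qed

lemma ident: "m (m (m A W) (m A B)) (m Z (m Y B)) = m (m (m Y W) Z) (m A B)"
proof -
  have e1: "m (m A W) (m A B) = m A (m W B)" using medial idem by metis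
  have e2: "m (m W B) (m Y B) = m (m W Y) B" using medial idem by metis
  have "m (m (m A W) (m A B)) (m Z (m Y B)) = m (m A (m W B)) (m Z (m Y B))" using e1 by simp
  also have "\<dots> = m (m A Z) (m (m W B) (m Y B))" by (rule medial)
  also have "\<dots> = m (m A Z) (m (m W Y) B)" using e2 by simp
  also have "\<dots> = m (m A (m W Y)) (m Z B)" by (rule medial)
  also have "\<dots> = m (m (m Y W) A) (m Z B)" using comm by metis
  also have "\<dots> = m (m (m Y W) Z) (m A B)" by (rule medial)
  finally show ?thesis .
qed

lemma cancel: assumes "cancellative M" "m a b = m a c" shows "b = c"
  using assms unfolding cancellative_def by blast

lemma pre_cancel: assumes "cancellative M" "pre n u p = pre n u q" shows "p = q"
  using assms(2)
proof (induction n arbitrary: u)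
  case 0 then show ?case by simp
next
  case (Suc n)
  then show ?case using cancel[OF assms(1)] by (metis pre.simps(2))
qed

lemma dir2to1:
  assumes "\<forall>x y z w :: nat \<Rightarrow> 'a.
       (\<forall>n. pre n x (z n) = pre n y (w n)) \<longrightarrow> M x = M y"
  shows "cancellative M"
  unfolding cancellative_def
proof (intro allI impI)
  fix x y z assume h: "m x y = m x z"
  have "\<forall>n. pre n (\<lambda>_. y) ((\<lambda>_. x) n) = pre n (\<lambda>_. z) ((\<lambda>_. x) n)"
    using const_chain[OF h] by simp
  then have "M (\<lambda>_. y) = M (\<lambda>_. z)" using assms[rule_format, of "\<lambda>_. y" "\<lambda>_. x" "\<lambda>_. z" "\<lambda>_. x"] by blast
  then show "y = z" using sm unfolding supermidpoint_def by simp
qed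

lemma dir1to2:
  assumes canc: "cancellative M" and H: "\<forall>n. pre n x (z n) = pre n y (w n)"
  shows "M x = M y"
proof -
  define a where "a n = M (\<lambda>i. x (n + i))" for n
  define b where "b n = M (\<lambda>i. y (n + i))" for n
  have arec: "a n = m (x n) (a (Suc n))" for n
    unfolding a_def using shift[of "\<lambda>i. x (n + i)"] by simp
  have brec: "b n = m (y n) (b (Suc n))" for n
    unfolding b_def using shift[of "\<lambda>i. y (n + i)"] by simp
  have K: "m (m (x n) (z (Suc n))) (w n) = m (m (y n) (w (Suc n))) (z n)" for n
  proof -
    have h1: "pre n x (m (x n) (z (Suc n))) = pre n y (m (y n) (w (Suc n)))"
      using H pre_last by metis
    have h2: "pre n x (z n) = pre n y (w n)" using H by blast
    have "m (pre n x (m (x n) (z (Suc n)))) (pre n y (w n)) = m (pre n y (m (y n) (w (Suc n)))) (pre n x (z n))"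
      using h1 h2 by simp
    then have "pre n (\<lambda>i. m (x i) (y i)) (m (m (x n) (z (Suc n))) (w n))
        = pre n (\<lambda>i. m (y i) (x i)) (m (m (y n) (w (Suc n))) (z n))"
      by (simp add: pre_medial)
    moreover have "(\<lambda>i. m (y i) (x i)) = (\<lambda>i. m (x i) (y i))" using comm by metis
    ultimately show ?thesis using pre_cancel[OF canc] by metis
  qed
  define \<alpha> where "\<alpha> n = m (a n) (w n)" for n
  define \<beta> where "\<beta> n = m (z n) (b n)" for n
  define t where "t n = m (a (Suc n)) (b (Suc n))" for n
  have GH: "m (m (\<alpha> (Suc n)) (t n)) (\<beta> n) = m (m (\<beta> (Suc n)) (t n)) (\<alpha> n)" for n
  proof -
    have "m (m (\<alpha> (Suc n)) (t n)) (\<beta> n) = m (m (m (y n) (w (Suc n))) (z n)) (t n)"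
      unfolding \<alpha>_def t_def \<beta>_def brec[of n] by (rule ident)
    also have "\<dots> = m (m (m (x n) (z (Suc n))) (w n)) (t n)" using K by simp
    also have "\<dots> = m (m (\<beta> (Suc n)) (t n)) (\<alpha> n)"
    proof -
      have "m (m (m (b (Suc n)) (z (Suc n))) (m (b (Suc n)) (a (Suc n)))) (m (w n) (m (x n) (a (Suc n))))
          = m (m (m (x n) (z (Suc n))) (w n)) (m (b (Suc n)) (a (Suc n)))" by (rule ident)
      then show ?thesis unfolding \<alpha>_def t_def \<beta>_def arec[of n] using comm by metis
    qed
    finally show ?thesis .
  qed
  define P' where "P' = M (\<lambda>n. \<alpha> (Suc n))"
  define Q' where "Q' = M (\<lambda>n. \<beta> (Suc n))"
  define T where "T = M t"
  have "M (\<lambda>n. m (m (\<alpha> (Suc n)) (t n)) (\<beta> n)) = M (\<lambda>n. m (m (\<beta> (Suc n)) (t n)) (\<alpha> n))"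
    using GH by simp
  moreover have "M (\<lambda>n. m (m (\<alpha> (Suc n)) (t n)) (\<beta> n)) = m (m P' T) (M \<beta>)"
    unfolding P'_def T_def by (simp add: Msplit)
  moreover have "M (\<lambda>n. m (m (\<beta> (Suc n)) (t n)) (\<alpha> n)) = m (m Q' T) (M \<alpha>)"
    unfolding Q'_def T_def by (simp add: Msplit)
  moreover have "M \<alpha> = m (\<alpha> 0) P'" unfolding P'_def by (rule shift)
  moreover have "M \<beta> = m (\<beta> 0) Q'" unfolding Q'_def by (rule shift)
  ultimately have EQ: "m (m P' T) (m (\<beta> 0) Q') = m (m Q' T) (m (\<alpha> 0) P')" by simp
  have "m (m P' T) (m (\<beta> 0) Q') = m (m P' T) (m (\<alpha> 0) Q')"
  proof -
    have "m (m Q' T) (m (\<alpha> 0) P') = m (m Q' (\<alpha> 0)) (m T P')" by (rule medial)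
    then show ?thesis using EQ comm by metis
  qed
  then have "m (\<beta> 0) Q' = m (\<alpha> 0) Q'" using cancel[OF canc] by blast
  then have "\<beta> 0 = \<alpha> 0" using cancel[OF canc] comm by metis
  moreover have "z 0 = w 0" using H[rule_format, of 0] by simp
  moreover have "a 0 = M x" "b 0 = M y" unfolding a_def b_def by simp_all
  ultimately have "m (w 0) (M x) = m (w 0) (M y)" unfolding \<alpha>_def \<beta>_def using comm by metis
  then show ?thesis using cancel[OF canc] by blast
qed

end

theorem mainTheorem6:
  fixes M :: "(nat \<Rightarrow> 'a) \<Rightarrow> 'a"
  assumes "supermidpoint M"
  shows "cancellative M \<longleftrightarrow>
    (\<forall>x y z w :: nat \<Rightarrow> 'a.
       (\<forall>n. midn M n (\<lambda>i. if i < n then x i else z n) =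
            midn M n (\<lambda>i. if i < n then y i else w n))
       \<longrightarrow> M x = M y)"
proof -
  interpret smp M using assms by unfold_locales
  show ?thesis unfolding midn_pre using dir1to2 dir2to1 by blast
qed

end
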